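(* Let $M$ be a metric structure. If for $j\in\mathbb{N}$ the definable predicates $\phi_j(x)=\phi_j(x_1,\dots,x_m)$ have the strong Erdős–Hajnal property and converge uniformly to $\phi(x)$, then $\phi(x)$ also has the strong Erdős–Hajnal property.
   Context: A $[0,1]$-valued definable predicate $\phi(x_1,\dots,x_m)$ on $M$ has the strong Erdős–Hajnal property if for every $\varepsilon>0$ there is $\delta>0$ such that for all finite $A_i\subseteq M^{x_i}$ ($1\le i\le m$) there are $B_i\subseteq A_i$ with $|B_i|\geq\delta|A_i|$ such that $(B_1,\dots,B_m)$ is $(\phi,\varepsilon)$-homogeneous, i.e. $|\phi(a)-\phi(a')|\leq\varepsilon$ for all $a,a'\in B_1\times\dots\times B_m$. *)

theory Defs
  imports "HOL-Analysis.Analysis"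
begin

text \<open>An m-ary predicate on M is modelled as a real-valued function on tuples
  a \<in> PiE {..<m} D, where D i is the carrier of the i-th variable block
  (the sort M^{x_i}).\<close>

definition phi_homogeneous ::
  "((nat \<Rightarrow> 'a) \<Rightarrow> real) \<Rightarrow> real \<Rightarrow> nat \<Rightarrow> (nat \<Rightarrow> 'a set) \<Rightarrow> bool" where
  "phi_homogeneous \<phi> \<epsilon> m B \<longleftrightarrow>
     (\<forall>a \<in> PiE {..<m} B. \<forall>a' \<in> PiE {..<m} B. \<bar>\<phi> a - \<phi> a'\<bar> \<le> \<epsilon>)"

definition strong_EH ::
  "((nat \<Rightarrow> 'a) \<Rightarrow> real) \<Rightarrow> nat \<Rightarrow> (nat \<Rightarrow> 'a set) \<Rightarrow> bool" where
  "strong_EH \<phi> m D \<longleftrightarrow>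
     (\<forall>\<epsilon>>0. \<exists>\<delta>>0. \<forall>A. (\<forall>i<m. finite (A i) \<and> A i \<subseteq> D i) \<longrightarrow>
        (\<exists>B. (\<forall>i<m. B i \<subseteq> A i \<and> real (card (B i)) \<ge> \<delta> * real (card (A i)))
             \<and> phi_homogeneous \<phi> \<epsilon> m B))"

end

theory Submission
  imports Defs
begin

theorem mainTheorem11:
  fixes \<phi>s :: "nat \<Rightarrow> (nat \<Rightarrow> 'a) \<Rightarrow> real"
    and \<phi> :: "(nat \<Rightarrow> 'a) \<Rightarrow> real"
    and m :: nat
    and D :: "nat \<Rightarrow> 'a set"
  assumes range01: "\<And>j a. a \<in> PiE {..<m} D \<Longrightarrow> \<phi>s j a \<in> {0..1}"
    and sEH: "\<And>j. strong_EH (\<phi>s j) m D"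
    and unif: "uniform_limit (PiE {..<m} D) \<phi>s \<phi> sequentially"
  shows "strong_EH \<phi> m D"
  unfolding strong_EH_def
proof (intro allI impI)
  fix \<epsilon> :: real assume e: "\<epsilon> > 0"
  have e3: "\<epsilon>/3 > 0" using e by simp
  have "\<forall>\<^sub>F n in sequentially. \<forall>x\<in>PiE {..<m} D. dist (\<phi>s n x) (\<phi> x) < \<epsilon>/3"
    using unif e3 unfolding uniform_limit_iff by blast
  then obtain j where j: "\<And>x. x \<in> PiE {..<m} D \<Longrightarrow> \<bar>\<phi>s j x - \<phi> x\<bar> < \<epsilon>/3"
    unfolding eventually_sequentially dist_real_def by blast
  obtain \<delta> where d: "\<delta> > 0" and dH: "\<And>A. (\<forall>i<m. finite (A i) \<and> A i \<subseteq> D i) \<Longrightarrow>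
        (\<exists>B. (\<forall>i<m. B i \<subseteq> A i \<and> real (card (B i)) \<ge> \<delta> * real (card (A i)))
             \<and> phi_homogeneous (\<phi>s j) (\<epsilon>/3) m B)"
    using sEH[of j] e3 unfolding strong_EH_def by blast
  show "\<exists>\<delta>>0. \<forall>A. (\<forall>i<m. finite (A i) \<and> A i \<subseteq> D i) \<longrightarrow>
        (\<exists>B. (\<forall>i<m. B i \<subseteq> A i \<and> real (card (B i)) \<ge> \<delta> * real (card (A i)))
             \<and> phi_homogeneous \<phi> \<epsilon> m B)"
  proof (intro exI[of _ \<delta>] conjI d allI impI)
    fix A assume A: "\<forall>i<m. finite (A i) \<and> A i \<subseteq> D i"
    obtain B where B: "\<forall>i<m. B i \<subseteq> A i \<and> real (card (B i)) \<ge> \<delta> * real (card (A i))"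
      and H: "phi_homogeneous (\<phi>s j) (\<epsilon>/3) m B" using dH[OF A] by blast
    have sub: "PiE {..<m} B \<subseteq> PiE {..<m} D"
      using A B by (intro PiE_mono) blast
    have "phi_homogeneous \<phi> \<epsilon> m B"
      unfolding phi_homogeneous_def
    proof (intro ballI)
      fix a a' assume a: "a \<in> PiE {..<m} B" and a': "a' \<in> PiE {..<m} B"
      have "\<bar>\<phi>s j a - \<phi>s j a'\<bar> \<le> \<epsilon>/3" using H a a' unfolding phi_homogeneous_def by blast
      moreover have "\<bar>\<phi>s j a - \<phi> a\<bar> < \<epsilon>/3" using j sub a by blast
      moreover have "\<bar>\<phi>s j a' - \<phi> a'\<bar> < \<epsilon>/3" using j sub a' by blast
      ultimately show "\<bar>\<phi> a - \<phi> a'\<bar> \<le> \<epsilon>" by linarith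
    qed
    then show "\<exists>B. (\<forall>i<m. B i \<subseteq> A i \<and> real (card (B i)) \<ge> \<delta> * real (card (A i)))
             \<and> phi_homogeneous \<phi> \<epsilon> m B" using B by blast
  qed
qed

end
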